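(* Let $n \ge 2$ be an integer and let $p_0 = \frac{n\log n - (n-1)\log(n-1)}{\log n}$. Then for every $1 \le p \le p_0$ we have $U(n,p) = 1$; that is, the maximum of the permanent over $n\times n$ matrices whose rows are unit vectors in $\ell_p^n$ equals $1$, the value attained by the identity matrix.
   Context: For $n\ge 1$ and $1 \le p \le \infty$, $U(n,p)$ denotes the maximum of $\mathrm{per}(A)=\sum_{\sigma\in S_n}\prod_{i=1}^n a_{i\sigma(i)}$ over all real $n\times n$ matrices $A$ each of whose rows has $\ell_p$-norm equal to $1$. *)

theory Defs
  imports "HOL-Analysis.Analysis" "HOL-Combinatorics.Permutations"
begin

text \<open>n x n real matrices are represented as functions nat => nat => real,
  only entries with indices below n matter.\<close>

definition per :: "nat \<Rightarrow> (nat \<Rightarrow> nat \<Rightarrow> real) \<Rightarrow> real" where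
  "per n A = (\<Sum>\<sigma> | \<sigma> permutes {..<n}. \<Prod>i<n. A i (\<sigma> i))"

definition row_lp_norm :: "nat \<Rightarrow> real \<Rightarrow> (nat \<Rightarrow> nat \<Rightarrow> real) \<Rightarrow> nat \<Rightarrow> real" where
  "row_lp_norm n p A i = (\<Sum>j<n. \<bar>A i j\<bar> powr p) powr (1 / p)"

definition U :: "nat \<Rightarrow> real \<Rightarrow> real" where
  "U n p = Sup {per n A | A. \<forall>i<n. row_lp_norm n p A i = 1}"

end

theory Submission
  imports Defs "HOL-Real_Asymp.Real_Asymp"
begin

lemma xlnx_tendsto0: "((\<lambda>x::real. x * ln x) \<longlongrightarrow> 0) (at_right 0)"
  by real_asymp

lemma continuous_on_xlnx: "continuous_on {0..} (\<lambda>x::real. x * ln x)"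
proof -
  have "continuous (at x within {0..}) (\<lambda>x::real. x * ln x)" if "x \<ge> 0" for x
  proof (cases "x = 0")
    case True
    then show ?thesis using xlnx_tendsto0
      by (simp add: continuous_within at_within_Ici_at_right)
  next
    case False
    with that have "x > 0" by simp
    then have "continuous (at x) (\<lambda>x::real. x * ln x)"
      by (intro continuous_intros) auto
    then show ?thesis using continuous_at_imp_continuous_at_within by blast
  qed
  then show ?thesis by (simp add: continuous_on_eq_continuous_within)
qed

lemma continuous_on_xlnx_Icc: "continuous_on {0..1} (\<lambda>x::real. x * ln x)"
  using continuous_on_subset[OF continuous_on_xlnx] by auto

lemma continuous_on_1mxlnx_Icc: "continuous_on {0..1} (\<lambda>x::real. (1 - x) * ln (1 - x))"
proof -
  have "continuous_on ((\<lambda>x. 1 - x) ` {0..1}) (\<lambda>x::real. x * ln x)"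
    by (rule continuous_on_subset[OF continuous_on_xlnx]) auto
  moreover have "continuous_on {0..1} (\<lambda>x::real. 1 - x)" by (intro continuous_intros)
  ultimately have "continuous_on {0..1} ((\<lambda>x::real. x * ln x) \<circ> (\<lambda>x. 1 - x))"
    using continuous_on_compose by blast
  then show ?thesis by (simp add: o_def)
qed

lemma convex_on_Icc_deriv:
  fixes f f' :: "real \<Rightarrow> real"
  assumes cont: "continuous_on {a..b} f"
    and der: "\<And>x. a < x \<Longrightarrow> x < b \<Longrightarrow> (f has_real_derivative f' x) (at x)"
    and mono: "\<And>x y. a < x \<Longrightarrow> x \<le> y \<Longrightarrow> y < b \<Longrightarrow> f' x \<le> f' y"
  shows "convex_on {a..b} f"
proof (rule convex_on_linorderI)
  show "convex {a..b}" by simp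
next
  fix t x y :: real
  assume t: "t > 0" "t < 1" and xy: "x \<in> {a..b}" "y \<in> {a..b}" "x < y"
  define z where "z = (1 - t) * x + t * y"
  have zx: "z - x = t * (y - x)" by (simp add: z_def algebra_simps)
  have yz: "y - z = (1 - t) * (y - x)" by (simp add: z_def algebra_simps)
  have p1: "t * (y - x) > 0" using t xy by simp
  have p2: "(1 - t) * (y - x) > 0" using t xy by simp
  have xz: "x < z" using zx p1 by linarith
  have zy: "z < y" using yz p2 by linarith
  have "\<exists>l \<xi>. x < \<xi> \<and> \<xi> < z \<and> DERIV f \<xi> :> l \<and> f z - f x = (z - x) * l"
  proof (rule MVT[OF xz])
    show "continuous_on {x..z} f" using cont xy zy by (auto intro: continuous_on_subset)
    show "f differentiable (at u)" if "x < u" "u < z" for u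
      using der[of u] that xy zy real_differentiable_def by auto
  qed
  then obtain l \<xi> where \<xi>: "x < \<xi>" "\<xi> < z" "DERIV f \<xi> :> l" "f z - f x = (z - x) * l" by blast
  have l: "l = f' \<xi>" using \<xi> der[of \<xi>] xy zy DERIV_unique by (smt (verit) atLeastAtMost_iff)
  have "\<exists>l \<eta>. z < \<eta> \<and> \<eta> < y \<and> DERIV f \<eta> :> l \<and> f y - f z = (y - z) * l"
  proof (rule MVT[OF zy])
    show "continuous_on {z..y} f" using cont xy xz by (auto intro: continuous_on_subset)
    show "f differentiable (at u)" if "z < u" "u < y" for u
      using der[of u] that xy xz real_differentiable_def by auto
  qed
  then obtain m \<eta> where \<eta>: "z < \<eta>" "\<eta> < y" "DERIV f \<eta> :> m" "f y - f z = (y - z) * m" by blast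
  have m: "m = f' \<eta>" using \<eta> der[of \<eta>] xy xz DERIV_unique by (smt (verit) atLeastAtMost_iff)
  have lm: "l \<le> m" using mono[of \<xi> \<eta>] \<xi> \<eta> xy l m by auto
  have e1: "f z - f x = t * (y - x) * l" using \<xi>(4) zx by simp
  have e2: "f y - f z = (1 - t) * (y - x) * m" using \<eta>(4) yz by simp
  have "(1 - t) * (f z - f x) = t * (1 - t) * (y - x) * l" unfolding e1 by (simp add: algebra_simps)
  also have "\<dots> \<le> t * (1 - t) * (y - x) * m" using lm t xy by (intro mult_left_mono) auto
  also have "\<dots> = t * (f y - f z)" unfolding e2 by (simp add: algebra_simps)
  finally have "f z \<le> (1 - t) * f x + t * f y" by (simp add: algebra_simps)
  then show "f ((1 - t) *\<^sub>R x + t *\<^sub>R y) \<le> (1 - t) * f x + t * f y" by (simp add: z_def)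
qed

lemma concave_on_Icc_deriv:
  fixes f f' :: "real \<Rightarrow> real"
  assumes cont: "continuous_on {a..b} f"
    and der: "\<And>x. a < x \<Longrightarrow> x < b \<Longrightarrow> (f has_real_derivative f' x) (at x)"
    and mono: "\<And>x y. a < x \<Longrightarrow> x \<le> y \<Longrightarrow> y < b \<Longrightarrow> f' y \<le> f' x"
  shows "concave_on {a..b} f"
  unfolding concave_on_def
proof (rule convex_on_Icc_deriv[where f' = "\<lambda>x. - f' x"])
  show "continuous_on {a..b} (\<lambda>x. - f x)" using cont by (intro continuous_intros)
  show "((\<lambda>x. - f x) has_real_derivative - f' x) (at x)" if "a < x" "x < b" for x
    using der[OF that] by (intro derivative_intros)
qed (use mono in auto)


definition Psi :: "real \<Rightarrow> real \<Rightarrow> real" where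
  "Psi c t = c * (t * ln t) - (1 - t) * ln (1 - t)"

definition dPsi :: "real \<Rightarrow> real \<Rightarrow> real" where
  "dPsi c t = c * (ln t + 1) + ln (1 - t) + 1"

lemma Psi_0[simp]: "Psi c 0 = 0" and Psi_1[simp]: "Psi c 1 = 0"
  by (simp_all add: Psi_def)

lemma Psi_deriv:
  assumes "0 < t" "t < 1"
  shows "(Psi c has_real_derivative dPsi c t) (at t)"
proof -
  have "((\<lambda>t. c * (t * ln t) - (1 - t) * ln (1 - t)) has_real_derivative dPsi c t) (at t)"
    using assms unfolding dPsi_def by (auto intro!: derivative_eq_intros simp: field_simps)
  moreover have "(\<lambda>t. c * (t * ln t) - (1 - t) * ln (1 - t)) = Psi c"
    by (simp add: Psi_def fun_eq_iff)
  ultimately show ?thesis by simp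
qed

lemma dPsi_deriv:
  assumes "0 < t" "t < 1"
  shows "(dPsi c has_real_derivative (c / t - 1 / (1 - t))) (at t)"
proof -
  have "((\<lambda>t. c * (ln t + 1) + ln (1 - t) + 1) has_real_derivative
      (c / t - 1 / (1 - t))) (at t)"
    using assms by (auto intro!: derivative_eq_intros simp: field_simps)
  moreover have "(\<lambda>t. c * (ln t + 1) + ln (1 - t) + 1) = dPsi c"
    by (simp add: dPsi_def fun_eq_iff)
  ultimately show ?thesis by (simp add: field_simps)
qed

lemma dPsi_mono:
  assumes c: "0 < c" and xy: "0 < x" "x \<le> y" "y \<le> c / (1 + c)"
  shows "dPsi c x \<le> dPsi c y"
proof (rule DERIV_nonneg_imp_nondecreasing[OF xy(2)])
  fix u assume u: "x \<le> u" "u \<le> y"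
  have cc: "c / (1 + c) < 1" using c by simp
  have u0: "0 < u" "u < 1" using u xy cc by linarith+
  have "y * (1 + c) \<le> c" using xy(3) c by (simp add: field_simps)
  moreover have "u * (1 + c) \<le> y * (1 + c)" using u c by (intro mult_right_mono) auto
  ultimately have "u * (1 + c) \<le> c" by linarith
  then have "u \<le> c * (1 - u)" by (simp add: algebra_simps)
  then have "1 / (1 - u) \<le> c / u" using u0 by (simp add: field_simps)
  then show "\<exists>d. DERIV (dPsi c) u :> d \<and> 0 \<le> d"
    using dPsi_deriv[OF u0] by (intro exI[of _ "c / u - 1 / (1 - u)"]) auto
qed

lemma dPsi_anti:
  assumes c: "0 < c" and xy: "c / (1 + c) \<le> x" "x \<le> y" "y < 1"
  shows "dPsi c y \<le> dPsi c x"
proof (rule DERIV_nonpos_imp_nonincreasing[OF xy(2)])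
  fix u assume u: "x \<le> u" "u \<le> y"
  have cc: "0 < c / (1 + c)" using c by simp
  have u0: "0 < u" "u < 1" using u xy cc by linarith+
  have "c \<le> x * (1 + c)" using xy(1) c by (simp add: field_simps)
  moreover have "x * (1 + c) \<le> u * (1 + c)" using u c by (intro mult_right_mono) auto
  ultimately have "c \<le> u * (1 + c)" by linarith
  then have "c * (1 - u) \<le> u" by (simp add: algebra_simps)
  then have "c / u \<le> 1 / (1 - u)" using u0 by (simp add: field_simps)
  then show "\<exists>d. DERIV (dPsi c) u :> d \<and> d \<le> 0"
    using dPsi_deriv[OF u0] by (intro exI[of _ "c / u - 1 / (1 - u)"]) auto
qed

lemma Psi_cont: "continuous_on {0..1} (Psi c)"
proof -
  have "continuous_on {0..1} (\<lambda>t. c * (t * ln t) - (1 - t) * ln (1 - t))"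
    by (rule continuous_on_diff[OF continuous_on_mult[OF continuous_on_const continuous_on_xlnx_Icc] continuous_on_1mxlnx_Icc])
  moreover have "(\<lambda>t. c * (t * ln t) - (1 - t) * ln (1 - t)) = Psi c"
    by (simp add: Psi_def fun_eq_iff)
  ultimately show ?thesis by metis
qed

lemma Psi_convex:
  assumes c: "0 < c"
  shows "convex_on {0..c / (1 + c)} (Psi c)"
proof (rule convex_on_Icc_deriv[where f' = "dPsi c"])
  have cc: "c / (1 + c) < 1" using c by simp
  show "continuous_on {0..c / (1 + c)} (Psi c)"
    using Psi_cont by (rule continuous_on_subset) (use cc in auto)
  show "(Psi c has_real_derivative dPsi c x) (at x)" if "0 < x" "x < c / (1 + c)" for x
    using Psi_deriv[of x c] that cc by auto
  show "dPsi c x \<le> dPsi c y" if "0 < x" "x \<le> y" "y < c / (1 + c)" for x y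
    using dPsi_mono[OF c] that by auto
qed

lemma Psi_concave:
  assumes c: "0 < c"
  shows "concave_on {c / (1 + c)..1} (Psi c)"
proof (rule concave_on_Icc_deriv[where f' = "dPsi c"])
  have cc: "0 < c / (1 + c)" using c by simp
  show "continuous_on {c / (1 + c)..1} (Psi c)"
    using Psi_cont by (rule continuous_on_subset) (use cc in auto)
  show "(Psi c has_real_derivative dPsi c x) (at x)" if "c / (1 + c) < x" "x < 1" for x
    using Psi_deriv[of x c] that cc by auto
  show "dPsi c y \<le> dPsi c x" if "c / (1 + c) < x" "x \<le> y" "y < 1" for x y
    using dPsi_anti[OF c] that by auto
qed


definition Dfun :: "real \<Rightarrow> real \<Rightarrow> real \<Rightarrow> real" where
  "Dfun N c t = Psi c t + (N - 1) * Psi c ((1 - t) / (N - 1))"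

definition dD :: "real \<Rightarrow> real \<Rightarrow> real \<Rightarrow> real" where
  "dD N c t = dPsi c t - dPsi c ((1 - t) / (N - 1))"

definition qf :: "real \<Rightarrow> real \<Rightarrow> real \<Rightarrow> real" where
  "qf N c t = c * (N - 2) - t * (N - 1 - c)"

lemma s_bounds:
  fixes N t :: real
  assumes "N \<ge> 2" "0 < t" "t < 1"
  shows "0 < (1 - t) / (N - 1)" "(1 - t) / (N - 1) < 1"
  using assms by (auto simp: field_simps)

lemma Dfun_deriv:
  assumes N: "N \<ge> 2" and t: "0 < t" "t < 1"
  shows "(Dfun N c has_real_derivative dD N c t) (at t)"
proof -
  define s where "s = (1 - t) / (N - 1)"
  have s: "0 < s" "s < 1" using s_bounds[OF N t] by (simp_all add: s_def)
  have g: "((\<lambda>t. (1 - t) / (N - 1)) has_real_derivative ((0 - 1) / (N - 1))) (at t)"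
    by (intro DERIV_cdivide DERIV_diff DERIV_const DERIV_ident)
  have h: "((\<lambda>t. Psi c ((1 - t) / (N - 1))) has_real_derivative dPsi c s * ((0 - 1) / (N - 1))) (at t)"
    using DERIV_chain2[OF Psi_deriv[OF s[unfolded s_def], of c] g] by (simp add: s_def)
  have "((\<lambda>t. Psi c t + (N - 1) * Psi c ((1 - t) / (N - 1))) has_real_derivative
      dPsi c t + (N - 1) * (dPsi c s * ((0 - 1) / (N - 1)))) (at t)"
    by (intro DERIV_add Psi_deriv t DERIV_cmult h)
  moreover have "dPsi c t + (N - 1) * (dPsi c s * ((0 - 1) / (N - 1))) = dD N c t"
    using N by (simp add: dD_def s_def field_simps)
  moreover have "(\<lambda>t. Psi c t + (N - 1) * Psi c ((1 - t) / (N - 1))) = Dfun N c"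
    by (simp add: Dfun_def fun_eq_iff)
  ultimately show ?thesis by metis
qed

lemma dD_deriv:
  assumes N: "N \<ge> 2" and t: "0 < t" "t < 1"
  shows "(dD N c has_real_derivative qf N c t / (t * (1 - t) * (N - 2 + t))) (at t)"
proof -
  define s where "s = (1 - t) / (N - 1)"
  have s: "0 < s" "s < 1" using s_bounds[OF N t] by (simp_all add: s_def)
  have g: "((\<lambda>t. (1 - t) / (N - 1)) has_real_derivative ((0 - 1) / (N - 1))) (at t)"
    by (intro DERIV_cdivide DERIV_diff DERIV_const DERIV_ident)
  have h: "((\<lambda>t. dPsi c ((1 - t) / (N - 1))) has_real_derivative (c / s - 1 / (1 - s)) * ((0 - 1) / (N - 1))) (at t)"
    using DERIV_chain2[OF dPsi_deriv[OF s[unfolded s_def], of c] g] by (simp add: s_def)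
  have "((\<lambda>t. dPsi c t - dPsi c ((1 - t) / (N - 1))) has_real_derivative
      (c / t - 1 / (1 - t)) - (c / s - 1 / (1 - s)) * ((0 - 1) / (N - 1))) (at t)"
    by (intro derivative_intros dPsi_deriv t h)
  moreover have "(c / t - 1 / (1 - t)) - (c / s - 1 / (1 - s)) * ((0 - 1) / (N - 1))
      = qf N c t / (t * (1 - t) * (N - 2 + t))"
  proof -
    have e1: "(N - 1) * s = 1 - t" using N by (simp add: s_def)
    have e2: "(N - 1) * (1 - s) = N - 2 + t" using N by (simp add: s_def field_simps)
    have "c / s * (1 / (N - 1)) = c / (1 - t)" using e1 s N by (simp add: field_simps)
    moreover have "1 / (1 - s) * (1 / (N - 1)) = 1 / (N - 2 + t)" using e2 s N by (simp add: field_simps)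
    moreover have "(c / s - 1 / (1 - s)) * ((0 - 1) / (N - 1)) = 1 / (1 - s) * (1 / (N - 1)) - c / s * (1 / (N - 1))"
      by (simp add: divide_inverse algebra_simps)
    ultimately have "(c / t - 1 / (1 - t)) - (c / s - 1 / (1 - s)) * ((0 - 1) / (N - 1))
        = c / t - 1 / (1 - t) + c / (1 - t) - 1 / (N - 2 + t)"
      by linarith
    also have "\<dots> = qf N c t / (t * (1 - t) * (N - 2 + t))"
    proof -
      have nz: "1 - t \<noteq> 0" "N - 2 + t \<noteq> 0" "t \<noteq> 0" "N + t - 2 \<noteq> 0" "t - 1 \<noteq> 0" using t N by auto
      define P where "P = t * (1 - t) * (N - 2 + t)"
      have P0: "P \<noteq> 0" using nz by (simp add: P_def)
      have a1: "c / t * P = c * (1 - t) * (N - 2 + t)" using nz by (simp add: P_def)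
      have a2: "1 / (1 - t) * P = t * (N - 2 + t)" using nz by (simp add: P_def)
      have a3: "c / (1 - t) * P = c * t * (N - 2 + t)" using nz by (simp add: P_def)
      have a4: "1 / (N - 2 + t) * P = t * (1 - t)" using nz by (simp add: P_def)
      have "(c / t - 1 / (1 - t) + c / (1 - t) - 1 / (N - 2 + t)) * P
          = c / t * P - 1 / (1 - t) * P + c / (1 - t) * P - 1 / (N - 2 + t) * P"
        by (simp add: algebra_simps)
      also have "\<dots> = qf N c t" unfolding a1 a2 a3 a4 qf_def by (simp add: algebra_simps)
      finally show ?thesis using P0 by (simp add: P_def eq_divide_eq)
    qed
    finally show ?thesis .
  qed
  moreover have "(\<lambda>t. dPsi c t - dPsi c ((1 - t) / (N - 1))) = dD N c"
    by (simp add: dD_def fun_eq_iff)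
  ultimately show ?thesis by metis
qed

lemma dD_mono:
  assumes N: "N \<ge> 2" and xy: "0 < x" "x \<le> y" "y < 1" and q: "\<And>u. x \<le> u \<Longrightarrow> u \<le> y \<Longrightarrow> 0 \<le> qf N c u"
  shows "dD N c x \<le> dD N c y"
proof (rule DERIV_nonneg_imp_nondecreasing[OF xy(2)])
  fix u assume u: "x \<le> u" "u \<le> y"
  have u0: "0 < u" "u < 1" using u xy by linarith+
  have "0 < u * (1 - u) * (N - 2 + u)" using u0 N by simp
  then have "0 \<le> qf N c u / (u * (1 - u) * (N - 2 + u))" using q[OF u] by simp
  then show "\<exists>d. DERIV (dD N c) u :> d \<and> 0 \<le> d"
    using dD_deriv[OF N u0] by blast
qed

lemma dD_anti:
  assumes N: "N \<ge> 2" and xy: "0 < x" "x \<le> y" "y < 1" and q: "\<And>u. x \<le> u \<Longrightarrow> u \<le> y \<Longrightarrow> qf N c u \<le> 0"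
  shows "dD N c y \<le> dD N c x"
proof (rule DERIV_nonpos_imp_nonincreasing[OF xy(2)])
  fix u assume u: "x \<le> u" "u \<le> y"
  have u0: "0 < u" "u < 1" using u xy by linarith+
  have "0 < u * (1 - u) * (N - 2 + u)" using u0 N by simp
  then have "qf N c u / (u * (1 - u) * (N - 2 + u)) \<le> 0" using q[OF u]
    by (simp add: divide_nonpos_pos)
  then show "\<exists>d. DERIV (dD N c) u :> d \<and> d \<le> 0"
    using dD_deriv[OF N u0] by blast
qed

lemma Dfun_cont:
  assumes N: "N \<ge> 2"
  shows "continuous_on {0..1} (Dfun N c)"
proof -
  have g: "continuous_on {0..1} (\<lambda>t::real. (1 - t) / (N - 1))" using N by (intro continuous_intros) auto
  have img: "(\<lambda>t::real. (1 - t) / (N - 1)) ` {0..1} \<subseteq> {0..1}" using N by (auto simp: field_simps)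
  have "continuous_on {0..1} (Psi c \<circ> (\<lambda>t. (1 - t) / (N - 1)))"
    by (rule continuous_on_compose[OF g]) (rule continuous_on_subset[OF Psi_cont img])
  then have "continuous_on {0..1} (\<lambda>t. Psi c t + (N - 1) * Psi c ((1 - t) / (N - 1)))"
    by (intro continuous_on_add continuous_on_mult continuous_on_const Psi_cont) (simp add: o_def)
  moreover have "(\<lambda>t. Psi c t + (N - 1) * Psi c ((1 - t) / (N - 1))) = Dfun N c"
    by (simp add: Dfun_def fun_eq_iff)
  ultimately show ?thesis by metis
qed

lemma Dfun_1: "Dfun N c 1 = 0" by (simp add: Dfun_def)

lemma s_at_inv:
  fixes N :: real
  assumes "N \<ge> 2" shows "(1 - 1 / N) / (N - 1) = 1 / N"
  using assms by (simp add: field_simps)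

lemma dD_inv: assumes "N \<ge> 2" shows "dD N c (1 / N) = 0"
  using s_at_inv[OF assms] by (simp add: dD_def)

lemma Dfun_inv: assumes "N \<ge> 2" shows "Dfun N c (1 / N) = N * Psi c (1 / N)"
  using s_at_inv[OF assms] by (simp add: Dfun_def algebra_simps)

lemma Dfun_nonneg:
  assumes N: "N \<ge> 2" and c: "0 < c" and c1: "1 \<le> c * (N - 1)" and P: "0 \<le> Psi c (1 / N)"
    and t: "0 < t" "t \<le> 1"
  shows "0 \<le> Dfun N c t"
proof -
  have iN: "0 < 1 / N" "1 / N < 1" using N by simp_all
  have D0: "0 \<le> Dfun N c (1 / N)" using Dfun_inv[OF N] P N by simp
  have q0: "0 \<le> qf N c (1 / N)"
  proof -
    have "qf N c (1 / N) = (c * (N - 1) * (N - 1) - (N - 1)) / N"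
      using N by (simp add: qf_def field_simps)
    moreover have "1 * (N - 1) \<le> c * (N - 1) * (N - 1)" using c1 N
      by (intro mult_right_mono) auto
    ultimately show ?thesis using N by simp
  qed
  have qa: "0 \<le> qf N c u" if "0 < u" "u \<le> 1 / N" for u
  proof (cases "N - 1 - c \<le> 0")
    case True
    then have "u * (N - 1 - c) \<le> 0" using that by (simp add: mult_nonneg_nonpos)
    moreover have "0 \<le> c * (N - 2)" using c N by simp
    ultimately show ?thesis by (simp add: qf_def)
  next
    case False
    then have "u * (N - 1 - c) \<le> 1 / N * (N - 1 - c)" using that by (intro mult_right_mono) auto
    then show ?thesis using q0 by (simp add: qf_def)
  qed
  have qb: "qf N c w < 0" if "1 / N \<le> u" "qf N c u < 0" "u \<le> w" for u w
  proof -
    have "(u - 1 / N) * (N - 1 - c) > 0" using q0 that(2) by (simp add: qf_def algebra_simps)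
    then have pos: "N - 1 - c > 0" using that(1) by (simp add: zero_less_mult_iff)
    have "u * (N - 1 - c) \<le> w * (N - 1 - c)" using that(3) pos by (intro mult_right_mono) auto
    then show ?thesis using that(2) by (simp add: qf_def)
  qed
  have qc: "0 \<le> qf N c w" if "1 / N \<le> w" "w \<le> u" "0 \<le> qf N c u" for u w
  proof (cases "N - 1 - c \<le> 0")
    case True
    then have "w * (N - 1 - c) \<le> 1 / N * (N - 1 - c)" using that by (intro mult_right_mono_neg) auto
    then show ?thesis using q0 by (simp add: qf_def)
  next
    case False
    then have "w * (N - 1 - c) \<le> u * (N - 1 - c)" using that by (intro mult_right_mono) auto
    then show ?thesis using that(3) by (simp add: qf_def)
  qed
  show ?thesis
  proof (cases "t \<le> 1 / N")
    case True
    have "Dfun N c (1 / N) \<le> Dfun N c t"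
    proof (rule DERIV_nonpos_imp_nonincreasing[OF True])
      fix w assume w: "t \<le> w" "w \<le> 1 / N"
      have w0: "0 < w" "w < 1" using w t iN by linarith+
      have "dD N c w \<le> dD N c (1 / N)"
        by (rule dD_mono[OF N w0(1) w(2) iN(2)]) (use qa w0 in auto)
      then show "\<exists>d. DERIV (Dfun N c) w :> d \<and> d \<le> 0"
        using Dfun_deriv[OF N w0] dD_inv[OF N] by auto
    qed
    then show ?thesis using D0 by linarith
  next
    case False
    then have tN: "1 / N \<le> t" by simp
    show ?thesis
    proof (cases "t = 1")
      case True then show ?thesis by (simp add: Dfun_1)
    next
      case False
      with t have t1: "t < 1" by simp
      show ?thesis
      proof (cases "\<exists>u. 1 / N \<le> u \<and> u \<le> t \<and> dD N c u < 0")
        case False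
        have "Dfun N c (1 / N) \<le> Dfun N c t"
        proof (rule DERIV_nonneg_imp_nondecreasing[OF tN])
          fix w assume w: "1 / N \<le> w" "w \<le> t"
          have w0: "0 < w" "w < 1" using w t1 iN by linarith+
          show "\<exists>d. DERIV (Dfun N c) w :> d \<and> 0 \<le> d"
            using Dfun_deriv[OF N w0] False w by (intro exI[of _ "dD N c w"]) auto
        qed
        then show ?thesis using D0 by linarith
      next
        case True
        then obtain u where u: "1 / N \<le> u" "u \<le> t" "dD N c u < 0" by blast
        have u0: "0 < u" "u < 1" using u iN t1 by linarith+
        have qu: "qf N c u < 0"
        proof (rule ccontr)
          assume "\<not> qf N c u < 0"
          then have "0 \<le> qf N c u" by simp
          then have "dD N c (1 / N) \<le> dD N c u"
            by (intro dD_mono[OF N iN(1) u(1) u0(2)]) (use qc in auto)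
          then show False using dD_inv[OF N] u(3) by simp
        qed
        have qneg: "\<And>v. u \<le> v \<Longrightarrow> qf N c v \<le> 0" using qb[OF u(1) qu] less_imp_le by blast
        have "Dfun N c 1 \<le> Dfun N c t"
        proof (rule DERIV_nonpos_imp_decreasing_open[OF t(2)])
          fix w assume w: "t < w" "w < 1"
          have w0: "0 < w" "w < 1" using w t by linarith+
          have "dD N c w \<le> dD N c u"
            by (rule dD_anti[OF N u0(1) _ w0(2)]) (use u w qneg in auto)
          then show "\<exists>d. DERIV (Dfun N c) w :> d \<and> d \<le> 0"
            using Dfun_deriv[OF N w0] u(3) by (intro exI[of _ "dD N c w"]) auto
        next
          show "continuous_on {t..1} (Dfun N c)"
            using Dfun_cont[OF N] by (rule continuous_on_subset) (use t in auto)
        qed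
        then show ?thesis by (simp add: Dfun_1)
      qed
    qed
  qed
qed


definition c0 :: "nat \<Rightarrow> real" where
  "c0 n = (real n - 1) * (ln (real n) - ln (real n - 1)) / ln (real n)"

lemma ln_le_sqrt_bound:
  fixes x :: real assumes x: "1 \<le> x"
  shows "ln x \<le> (x - 1) / sqrt x"
proof -
  define m where "m = sqrt x"
  have m1: "1 \<le> m" using x by (simp add: m_def)
  have xm: "x = m * m" using x by (simp add: m_def)
  have "1 - 1 / 1 - 2 * ln 1 \<le> m - 1 / m - 2 * ln m"
  proof (rule DERIV_nonneg_imp_nondecreasing[OF m1])
    fix u :: real assume u: "1 \<le> u" "u \<le> m"
    have "((\<lambda>u. u - 1 / u - 2 * ln u) has_real_derivative (1 + 1 / (u * u) - 2 / u)) (at u)"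
      using u by (auto intro!: derivative_eq_intros simp: field_simps power2_eq_square)
    moreover have "1 + 1 / (u * u) - 2 / u = (u - 1) * (u - 1) / (u * u)"
      using u by (simp add: field_simps)
    moreover have "0 \<le> (u - 1) * (u - 1) / (u * u)" by simp
    ultimately show "\<exists>d. ((\<lambda>u. u - 1 / u - 2 * ln u) has_real_derivative d) (at u) \<and> 0 \<le> d"
      by auto
  qed
  then have "2 * ln m \<le> m - 1 / m" by simp
  moreover have "ln x = 2 * ln m" using m1 xm by (simp add: ln_mult)
  moreover have "(x - 1) / sqrt x = m - 1 / m" using m1 xm by (simp add: m_def[symmetric] field_simps)
  ultimately show ?thesis by simp
qed

lemma c0_facts:
  assumes n: "n \<ge> 2"
  shows "0 < c0 n" "Psi (c0 n) (1 / real n) = 0" "1 \<le> c0 n * (real n - 1)"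
proof -
  define N where "N = real n"
  have N: "2 \<le> N" using n by (simp add: N_def)
  have lnN: "0 < ln N" using N by simp
  have lnd: "0 < ln N - ln (N - 1)" using N by simp
  have c: "c0 n = (N - 1) * (ln N - ln (N - 1)) / ln N" by (simp add: c0_def N_def)
  show "0 < c0 n" unfolding c using N lnN lnd by simp
  have l1: "ln (1 / N) = - ln N" using N by (simp add: ln_div)
  have l2: "ln (1 - 1 / N) = ln (N - 1) - ln N"
  proof -
    have "1 - 1 / N = (N - 1) / N" using N by (simp add: field_simps)
    then show ?thesis using N by (simp add: ln_div)
  qed
  have "Psi (c0 n) (1 / N) = (c0 n * ln N - (N - 1) * (ln N - ln (N - 1))) * (- 1 / N)"
    unfolding Psi_def l1 l2 using N by (simp add: field_simps)
  also have "c0 n * ln N = (N - 1) * (ln N - ln (N - 1))" unfolding c using lnN by simp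
  finally show "Psi (c0 n) (1 / real n) = 0" by (simp add: N_def)
  show "1 \<le> c0 n * (real n - 1)"
  proof (cases "n = 2")
    case True
    then show ?thesis by (simp add: c0_def)
  next
    case False
    then have N3: "3 \<le> N" using n by (simp add: N_def)
    have "ln (N - 1) - ln N = ln ((N - 1) / N)" using N by (simp add: ln_div)
    also have "\<dots> \<le> (N - 1) / N - 1" using N by (intro ln_le_minus_one) simp
    also have "\<dots> = - (1 / N)" using N by (simp add: field_simps)
    finally have d1: "1 / N \<le> ln N - ln (N - 1)" by simp
    have sq: "sqrt N \<le> N - 1"
    proof -
      have "3 * N \<le> N * N" using N3 by (intro mult_right_mono) auto
      then have "N \<le> (N - 1)^2" by (simp add: power2_eq_square algebra_simps)
      then have "sqrt N \<le> sqrt ((N - 1)^2)" by (rule real_sqrt_le_mono)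
      then show ?thesis using N by simp
    qed
    have sN: "0 < sqrt N" using N by simp
    have "ln N \<le> (N - 1) / sqrt N" using N by (intro ln_le_sqrt_bound) simp
    also have "(N - 1) / sqrt N = (N - 1) * sqrt N / N"
      using sN N by (simp add: field_simps)
    also have "\<dots> \<le> (N - 1) * (N - 1) / N"
      using sq N by (intro divide_right_mono mult_left_mono) auto
    also have "\<dots> = (N - 1) * (N - 1) * (1 / N)" by simp
    also have "\<dots> \<le> (N - 1) * (N - 1) * (ln N - ln (N - 1))"
      using d1 N by (intro mult_left_mono) auto
    finally have "ln N \<le> (N - 1) * (N - 1) * (ln N - ln (N - 1))" .
    then have "1 \<le> (N - 1) * (N - 1) * (ln N - ln (N - 1)) / ln N" using lnN by simp
    then show ?thesis unfolding c N_def[symmetric] by (simp add: field_simps)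
  qed
qed


lemma sum_upd:
  fixes f :: "'a \<Rightarrow> real"
  assumes "finite I" "a \<in> I"
  shows "sum (f(a := v)) I = sum f I + (v - f a)"
proof -
  have "sum (f(a := v)) I = (f(a := v)) a + sum (f(a := v)) (I - {a})"
    using assms by (simp add: sum.remove)
  also have "sum (f(a := v)) (I - {a}) = sum f (I - {a})" by (rule sum.cong) auto
  also have "sum f (I - {a}) = sum f I - f a" using assms by (simp add: sum_diff1)
  finally show ?thesis by simp
qed

lemma merge_ineq:
  assumes c: "0 < c" and ab: "c / (1 + c) < a" "c / (1 + c) < b" "a + b - c / (1 + c) \<le> 1"
  shows "Psi c (c / (1 + c)) + Psi c (a + b - c / (1 + c)) \<le> Psi c a + Psi c b"
proof -
  define \<tau> where "\<tau> = c / (1 + c)"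
  define s where "s = a + b - \<tau>"
  have ab': "\<tau> < a" "\<tau> < b" "s \<le> 1" using ab by (simp_all add: \<tau>_def s_def)
  have sd: "0 < s - \<tau>" using ab' by (simp add: s_def)
  have conc: "concave_on {\<tau>..1} (Psi c)" using Psi_concave[OF c] by (simp add: \<tau>_def)
  define t1 where "t1 = (a - \<tau>) / (s - \<tau>)"
  have t1: "0 \<le> t1" "t1 \<le> 1" using ab' sd by (simp_all add: t1_def s_def field_simps)
  have mem: "\<tau> \<in> {\<tau>..1}" "s \<in> {\<tau>..1}" using ab' sd by auto
  have tt: "t1 * (s - \<tau>) = a - \<tau>" using sd by (simp add: t1_def)
  have ea: "(1 - t1) *\<^sub>R \<tau> + t1 *\<^sub>R s = a"
  proof -
    have "(1 - t1) * \<tau> + t1 * s = \<tau> + t1 * (s - \<tau>)" by (simp add: algebra_simps)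
    then show ?thesis using tt by simp
  qed
  have eb: "(1 - (1 - t1)) *\<^sub>R \<tau> + (1 - t1) *\<^sub>R s = b"
  proof -
    have "(1 - (1 - t1)) * \<tau> + (1 - t1) * s = s - t1 * (s - \<tau>)" by (simp add: algebra_simps)
    then show ?thesis using tt by (simp add: s_def)
  qed
  have "(1 - t1) * Psi c \<tau> + t1 * Psi c s \<le> Psi c a"
    using concave_onD[OF conc t1 mem] ea by simp
  moreover have "(1 - (1 - t1)) * Psi c \<tau> + (1 - t1) * Psi c s \<le> Psi c b"
    using concave_onD[OF conc _ _ mem, of "1 - t1"] t1 eb by simp
  ultimately show ?thesis by (simp add: \<tau>_def[symmetric] s_def[symmetric] algebra_simps)
qed

lemma merge_all:
  fixes I :: "'a set"
  assumes c: "0 < c" and fin: "finite I"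
  shows "\<forall>i\<in>I. 0 \<le> \<pi> i \<Longrightarrow> sum \<pi> I = 1 \<Longrightarrow>
    \<exists>\<pi>'. (\<forall>i\<in>I. 0 \<le> \<pi>' i) \<and> sum \<pi>' I = 1 \<and> card {i\<in>I. c / (1 + c) < \<pi>' i} \<le> 1 \<and>
      (\<Sum>i\<in>I. Psi c (\<pi>' i)) \<le> (\<Sum>i\<in>I. Psi c (\<pi> i))"
proof (induction "card {i\<in>I. c / (1 + c) < \<pi> i}" arbitrary: \<pi> rule: less_induct)
  case less
  define \<tau> where "\<tau> = c / (1 + c)"
  have tau0: "0 < \<tau>" using c by (simp add: \<tau>_def)
  show ?case
  proof (cases "card {i\<in>I. \<tau> < \<pi> i} \<le> 1")
    case True
    then show ?thesis using less.prems by (intro exI[of _ \<pi>]) (simp add: \<tau>_def)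
  next
    case False
    then have "2 \<le> card {i\<in>I. \<tau> < \<pi> i}" by simp
    then have "{i\<in>I. \<tau> < \<pi> i} \<noteq> {}"
    proof (intro notI)
      assume "{i\<in>I. \<tau> < \<pi> i} = {}"
      then have "card {i\<in>I. \<tau> < \<pi> i} = 0" by (simp only: card.empty)
      with \<open>2 \<le> card {i\<in>I. \<tau> < \<pi> i}\<close> show False by simp
    qed
    then obtain a where a: "a \<in> {i\<in>I. \<tau> < \<pi> i}" by blast
    have "card ({i\<in>I. \<tau> < \<pi> i} - {a}) \<ge> 1"
      using \<open>2 \<le> card {i\<in>I. \<tau> < \<pi> i}\<close> a fin by (simp add: card_Diff_singleton)
    then have "{i\<in>I. \<tau> < \<pi> i} - {a} \<noteq> {}" by (metis card.empty not_one_le_zero)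
    then obtain b where b: "b \<in> {i\<in>I. \<tau> < \<pi> i} - {a}" by blast
    have ab: "a \<in> {i\<in>I. \<tau> < \<pi> i}" "b \<in> {i\<in>I. \<tau> < \<pi> i}" "a \<noteq> b" using a b by auto
    have aI: "a \<in> I" and bI: "b \<in> I" and pa: "\<tau> < \<pi> a" and pb: "\<tau> < \<pi> b" using ab by auto
    have sum_le: "\<pi> a + \<pi> b \<le> 1"
    proof -
      have "sum \<pi> {a, b} \<le> sum \<pi> I"
        using less.prems(1) aI bI fin by (intro sum_mono2) auto
      then show ?thesis using ab(3) less.prems(2) by simp
    qed
    define \<pi>2 where "\<pi>2 = \<pi>(a := \<tau>, b := \<pi> a + \<pi> b - \<tau>)"
    have nn2: "\<forall>i\<in>I. 0 \<le> \<pi>2 i" using less.prems(1) tau0 pa pb by (auto simp: \<pi>2_def)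
    have sum2: "sum \<pi>2 I = 1"
    proof -
      have "sum \<pi>2 I = sum (\<pi>(a := \<tau>)) I + ((\<pi> a + \<pi> b - \<tau>) - (\<pi>(a := \<tau>)) b)"
        unfolding \<pi>2_def by (rule sum_upd[OF fin bI])
      also have "sum (\<pi>(a := \<tau>)) I = sum \<pi> I + (\<tau> - \<pi> a)" by (rule sum_upd[OF fin aI])
      finally show ?thesis using ab(3) less.prems(2) by simp
    qed
    have sub: "{i\<in>I. \<tau> < \<pi>2 i} \<subseteq> {i\<in>I. \<tau> < \<pi> i} - {a}"
      using ab by (auto simp: \<pi>2_def split: if_splits)
    have lt: "card {i\<in>I. \<tau> < \<pi>2 i} < card {i\<in>I. \<tau> < \<pi> i}"
    proof -
      have "card {i\<in>I. \<tau> < \<pi>2 i} \<le> card ({i\<in>I. \<tau> < \<pi> i} - {a})"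
        using fin sub by (intro card_mono) auto
      also have "\<dots> < card {i\<in>I. \<tau> < \<pi> i}"
        using fin ab(1) by (intro card_Diff1_less) auto
      finally show ?thesis .
    qed
    have psi2: "(\<Sum>i\<in>I. Psi c (\<pi>2 i)) \<le> (\<Sum>i\<in>I. Psi c (\<pi> i))"
    proof -
      define g where "g = (\<lambda>i. Psi c (\<pi> i))"
      have geq: "(\<lambda>i. Psi c (\<pi>2 i)) = g(a := Psi c \<tau>, b := Psi c (\<pi> a + \<pi> b - \<tau>))"
        using ab(3) by (auto simp: \<pi>2_def g_def fun_eq_iff)
      have "(\<Sum>i\<in>I. Psi c (\<pi>2 i)) = sum (g(a := Psi c \<tau>, b := Psi c (\<pi> a + \<pi> b - \<tau>))) I"
        unfolding geq by (rule refl)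
      also have "\<dots> = sum (g(a := Psi c \<tau>)) I + (Psi c (\<pi> a + \<pi> b - \<tau>) - (g(a := Psi c \<tau>)) b)"
        by (rule sum_upd[OF fin bI])
      also have "sum (g(a := Psi c \<tau>)) I = sum g I + (Psi c \<tau> - g a)" by (rule sum_upd[OF fin aI])
      finally have "(\<Sum>i\<in>I. Psi c (\<pi>2 i)) = sum g I + (Psi c \<tau> + Psi c (\<pi> a + \<pi> b - \<tau>) - g a - g b)"
        using ab(3) by simp
      moreover have "Psi c \<tau> + Psi c (\<pi> a + \<pi> b - \<tau>) \<le> g a + g b"
        unfolding g_def \<tau>_def using merge_ineq[OF c] pa pb sum_le tau0 by (simp add: \<tau>_def)
      ultimately show ?thesis by (simp add: g_def)
    qed
    obtain \<pi>' where \<pi>': "\<forall>i\<in>I. 0 \<le> \<pi>' i" "sum \<pi>' I = 1" "card {i\<in>I. c / (1 + c) < \<pi>' i} \<le> 1"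
      "(\<Sum>i\<in>I. Psi c (\<pi>' i)) \<le> (\<Sum>i\<in>I. Psi c (\<pi>2 i))"
      using less.hyps[OF lt[unfolded \<tau>_def] nn2 sum2] by blast
    show ?thesis using \<pi>' psi2 by (intro exI[of _ \<pi>']) auto
  qed
qed

lemma jensen_pad:
  fixes J :: "'a set"
  assumes c: "0 < c" and fin: "finite J" and card: "card J \<le> m" and m: "1 \<le> m"
    and bd: "\<And>j. j \<in> J \<Longrightarrow> 0 \<le> \<pi> j \<and> \<pi> j \<le> c / (1 + c)"
  shows "real m * Psi c (sum \<pi> J / real m) \<le> (\<Sum>j\<in>J. Psi c (\<pi> j))"
proof (cases "J = {}")
  case True
  then show ?thesis by simp
next
  case False
  define \<tau> where "\<tau> = c / (1 + c)"
  define k where "k = card J"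
  have k1: "1 \<le> k" using False fin by (simp add: k_def Suc_le_eq card_gt_0_iff)
  have conv: "convex_on {0..\<tau>} (Psi c)" using Psi_convex[OF c] by (simp add: \<tau>_def)
  have tau0: "0 \<le> \<tau>" using c by (simp add: \<tau>_def)
  define S where "S = sum \<pi> J"
  have S0: "0 \<le> S" using bd by (simp add: S_def sum_nonneg)
  have Sk: "S \<le> real k * \<tau>" unfolding S_def k_def using bd by (intro sum_bounded_above) (simp add: \<tau>_def)
  have mean: "S / real k \<in> {0..\<tau>}" using S0 Sk k1 by (auto simp: field_simps)
  have "Psi c (\<Sum>j\<in>J. (1 / real k) *\<^sub>R \<pi> j) \<le> (\<Sum>j\<in>J. (1 / real k) * Psi c (\<pi> j))"
    by (rule convex_on_sum[OF fin False conv]) (use bd k1 in \<open>auto simp: k_def \<tau>_def\<close>)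
  then have j1: "real k * Psi c (S / real k) \<le> (\<Sum>j\<in>J. Psi c (\<pi> j))"
    using k1 by (simp add: S_def sum_divide_distrib[symmetric] sum_distrib_left[symmetric] field_simps)
  define t where "t = real k / real m"
  have t: "0 \<le> t" "t \<le> 1" using card m by (simp_all add: t_def k_def)
  have "Psi c ((1 - t) *\<^sub>R 0 + t *\<^sub>R (S / real k)) \<le> (1 - t) * Psi c 0 + t * Psi c (S / real k)"
    by (rule convex_onD[OF conv t]) (use mean tau0 in auto)
  then have "Psi c (S / real m) \<le> t * Psi c (S / real k)"
    using k1 m by (simp add: t_def)
  then have "real m * Psi c (S / real m) \<le> real m * (t * Psi c (S / real k))"
    by (intro mult_left_mono) auto
  also have "\<dots> = real k * Psi c (S / real k)" using m by (simp add: t_def)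
  finally show ?thesis using j1 by (simp add: S_def)
qed


lemma lemmaE0:
  fixes I :: "'a set" and \<pi> :: "'a \<Rightarrow> real"
  assumes n: "n \<ge> 2" and fin: "finite I" and card: "card I \<le> n"
    and nn: "\<forall>i\<in>I. 0 \<le> \<pi> i" and s1: "sum \<pi> I = 1"
  shows "0 \<le> (\<Sum>i\<in>I. Psi (c0 n) (\<pi> i))"
proof -
  define c where "c = c0 n"
  define N where "N = real n"
  define \<tau> where "\<tau> = c / (1 + c)"
  have c: "0 < c" "Psi c (1 / N) = 0" "1 \<le> c * (N - 1)" using c0_facts[OF n] by (simp_all add: c_def N_def)
  have N: "2 \<le> N" using n by (simp add: N_def)
  have tau0: "0 < \<tau>" using c by (simp add: \<tau>_def)
  obtain \<pi>' where \<pi>': "\<forall>i\<in>I. 0 \<le> \<pi>' i" "sum \<pi>' I = 1" "card {i\<in>I. \<tau> < \<pi>' i} \<le> 1"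
      "(\<Sum>i\<in>I. Psi c (\<pi>' i)) \<le> (\<Sum>i\<in>I. Psi c (\<pi> i))"
    using merge_all[OF c(1) fin nn s1] by (auto simp: \<tau>_def)
  have le1: "\<pi>' i \<le> 1" if "i \<in> I" for i
    using member_le_sum[of i I \<pi>'] that \<pi>'(1,2) fin by auto
  obtain i0 where i0: "i0 \<in> I" "0 < \<pi>' i0" "\<And>j. j \<in> I - {i0} \<Longrightarrow> \<pi>' j \<le> \<tau>"
  proof (cases "{i\<in>I. \<tau> < \<pi>' i} = {}")
    case False
    then obtain i0 where i0: "i0 \<in> {i\<in>I. \<tau> < \<pi>' i}" by blast
    have fB: "finite {i\<in>I. \<tau> < \<pi>' i}" using fin by simp
    have one: "\<forall>a1\<in>{i\<in>I. \<tau> < \<pi>' i}. \<forall>a2\<in>{i\<in>I. \<tau> < \<pi>' i}. a1 = a2"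
      using \<pi>'(3) card_le_Suc0_iff_eq[OF fB] by simp
    show ?thesis
    proof (rule that[of i0])
      show "i0 \<in> I" "0 < \<pi>' i0" using i0 tau0 by auto
      show "\<pi>' j \<le> \<tau>" if "j \<in> I - {i0}" for j
        using one i0 that by (metis (mono_tags, lifting) DiffE insertI1 mem_Collect_eq not_le)
    qed
  next
    case True
    have "\<exists>i\<in>I. 0 < \<pi>' i"
    proof (rule ccontr)
      assume "\<not> (\<exists>i\<in>I. 0 < \<pi>' i)"
      then have "sum \<pi>' I \<le> 0" by (intro sum_nonpos) auto
      then show False using \<pi>'(2) by simp
    qed
    then obtain i0 where "i0 \<in> I" "0 < \<pi>' i0" by blast
    then show ?thesis using True by (intro that[of i0]) auto
  qed
  define t where "t = \<pi>' i0"
  have t: "0 < t" "t \<le> 1" using i0 le1 by (auto simp: t_def)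
  define J where "J = I - {i0}"
  have finJ: "finite J" using fin by (simp add: J_def)
  have cardJ: "card J \<le> n - 1" using card i0(1) fin by (simp add: J_def card_Diff_singleton)
  have sumJ: "sum \<pi>' J = 1 - t" using \<pi>'(2) i0(1) fin by (simp add: J_def t_def sum_diff1)
  have "real (n - 1) * Psi c (sum \<pi>' J / real (n - 1)) \<le> (\<Sum>j\<in>J. Psi c (\<pi>' j))"
    by (rule jensen_pad[OF c(1) finJ cardJ]) (use n i0(3) \<pi>'(1) in \<open>auto simp: J_def \<tau>_def\<close>)
  moreover have "real (n - 1) = N - 1" using n by (simp add: N_def of_nat_diff)
  ultimately have jj: "(N - 1) * Psi c ((1 - t) / (N - 1)) \<le> (\<Sum>j\<in>J. Psi c (\<pi>' j))"
    using sumJ by simp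
  have "(\<Sum>i\<in>I. Psi c (\<pi>' i)) = Psi c t + (\<Sum>j\<in>J. Psi c (\<pi>' j))"
    using fin i0(1) by (simp add: J_def t_def sum.remove)
  moreover have "0 \<le> Dfun N c t"
    by (rule Dfun_nonneg[OF N c(1) c(3) _ t]) (simp add: c(2))
  ultimately have "0 \<le> (\<Sum>i\<in>I. Psi c (\<pi>' i))" using jj by (simp add: Dfun_def)
  then show ?thesis using \<pi>'(4) by (simp add: c_def)
qed

lemma xlnx_nonpos: "0 \<le> t \<Longrightarrow> t \<le> 1 \<Longrightarrow> t * ln t \<le> (0::real)"
  by (cases "t = 0") (auto simp: mult_nonneg_nonpos)

lemma lemmaE:
  fixes I :: "'a set" and \<pi> :: "'a \<Rightarrow> real"
  assumes n: "n \<ge> 2" and fin: "finite I" and card: "card I \<le> n"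
    and nn: "\<forall>i\<in>I. 0 \<le> \<pi> i" and s1: "sum \<pi> I = 1" and c: "0 \<le> c" "c \<le> c0 n"
  shows "0 \<le> (\<Sum>i\<in>I. Psi c (\<pi> i))"
proof -
  have le1: "\<pi> i \<le> 1" if "i \<in> I" for i
    using member_le_sum[of i I \<pi>] that nn s1 fin by auto
  have "Psi (c0 n) (\<pi> i) \<le> Psi c (\<pi> i)" if "i \<in> I" for i
  proof -
    have "\<pi> i * ln (\<pi> i) \<le> 0" using xlnx_nonpos nn le1 that by auto
    then have "c0 n * (\<pi> i * ln (\<pi> i)) \<le> c * (\<pi> i * ln (\<pi> i))"
      using c by (intro mult_right_mono_neg) auto
    then show ?thesis by (simp add: Psi_def)
  qed
  then have "(\<Sum>i\<in>I. Psi (c0 n) (\<pi> i)) \<le> (\<Sum>i\<in>I. Psi c (\<pi> i))" by (intro sum_mono) auto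
  then show ?thesis using lemmaE0[OF n fin card nn s1] by linarith
qed


lemma gibbs_half:
  fixes q y :: real
  assumes "0 \<le> q" "0 \<le> y" "0 < q \<Longrightarrow> 0 < y"
  shows "q * ln y - q * ln q \<le> y - q"
proof (cases "q = 0")
  case True then show ?thesis using assms by simp
next
  case False
  then have q: "0 < q" using assms by simp
  then have y: "0 < y" using assms by simp
  have "q * ln y - q * ln q = q * ln (y / q)" using q y by (simp add: ln_div algebra_simps)
  also have "\<dots> \<le> q * (y / q - 1)" using q y by (intro mult_left_mono ln_le_minus_one) auto
  also have "\<dots> = y - q" using q by (simp add: field_simps)
  finally show ?thesis .
qed

lemma gibbs2:
  fixes q y :: real
  assumes q: "0 \<le> q" "q \<le> 1" and y: "0 \<le> y" "y \<le> 1"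
    and h1: "0 < q \<Longrightarrow> 0 < y" and h2: "q < 1 \<Longrightarrow> y < 1"
  shows "q * ln y + (1 - q) * ln (1 - y) \<le> q * ln q + (1 - q) * ln (1 - q)"
proof -
  have a: "q * ln y - q * ln q \<le> y - q" by (rule gibbs_half) (use q y h1 in auto)
  have b: "(1 - q) * ln (1 - y) - (1 - q) * ln (1 - q) \<le> (1 - y) - (1 - q)"
    by (rule gibbs_half) (use q y h2 in auto)
  from a b show ?thesis by simp
qed

lemma lemmaC:
  fixes I :: "'a set" and y :: "'a \<Rightarrow> real"
  assumes n: "n \<ge> 2" and fin: "finite I" and card: "card I \<le> n"
    and y: "\<forall>i\<in>I. 0 \<le> y i \<and> y i \<le> 1" and p: "1 \<le> p" "p - 1 \<le> c0 n"
  shows "(\<Sum>i\<in>I. (y i * (\<Prod>k\<in>I - {i}. 1 - y k)) powr (1 / p)) \<le> 1"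
proof -
  define r where "r = 1 / p"
  have r: "0 < r" "r \<le> 1" "r * p = 1" using p by (simp_all add: r_def)
  define a where "a i = y i * (\<Prod>k\<in>I - {i}. 1 - y k)" for i
  have a0: "0 \<le> a i" if "i \<in> I" for i
    using y that by (auto simp: a_def intro!: mult_nonneg_nonneg prod_nonneg)
  define S where "S = (\<Sum>i\<in>I. a i powr r)"
  have S0: "0 \<le> S" by (simp add: S_def sum_nonneg)
  show ?thesis
  proof (cases "S = 0")
    case True then show ?thesis by (simp add: S_def a_def r_def)
  next
    case False
    then have Spos: "0 < S" using S0 by simp
    define \<pi> where "\<pi> i = a i powr r / S" for i
    have \<pi>0: "\<forall>i\<in>I. 0 \<le> \<pi> i" using Spos by (simp add: \<pi>_def)
    have \<pi>1: "sum \<pi> I = 1" using Spos by (simp add: \<pi>_def S_def sum_divide_distrib[symmetric])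
    have \<pi>le1: "\<pi> i \<le> 1" if "i \<in> I" for i
      using member_le_sum[of i I \<pi>] that \<pi>0 \<pi>1 fin by auto
    have apos: "0 < a i" if "i \<in> I" "0 < \<pi> i" for i
      using that a0[OF that(1)] by (cases "a i = 0") (auto simp: \<pi>_def)
    have apos_y: "0 < y i" "\<forall>k\<in>I - {i}. 0 < 1 - y k" if "i \<in> I" "0 < \<pi> i" for i
    proof -
      have "0 < a i" using apos that by blast
      then have "y i \<noteq> 0 \<and> (\<Prod>k\<in>I - {i}. 1 - y k) \<noteq> 0" by (auto simp: a_def)
      then show "0 < y i" "\<forall>k\<in>I - {i}. 0 < 1 - y k"
        using y that fin by (auto simp: prod_zero_iff less_le)
    qed
    have lnS: "ln S = (\<Sum>i\<in>I. \<pi> i * (r * ln (a i))) - (\<Sum>i\<in>I. \<pi> i * ln (\<pi> i))"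
    proof -
      have "ln S = (\<Sum>i\<in>I. \<pi> i * ln S)" using \<pi>1 by (simp add: sum_distrib_right[symmetric])
      also have "\<dots> = (\<Sum>i\<in>I. \<pi> i * (r * ln (a i)) - \<pi> i * ln (\<pi> i))"
      proof (rule sum.cong[OF refl])
        fix i assume i: "i \<in> I"
        show "\<pi> i * ln S = \<pi> i * (r * ln (a i)) - \<pi> i * ln (\<pi> i)"
        proof (cases "\<pi> i = 0")
          case True then show ?thesis by simp
        next
          case False
          then have pp: "0 < \<pi> i" using \<pi>0 i by (simp add: less_le)
          have ai: "0 < a i" using apos[OF i pp] .
          have "ln (\<pi> i) = ln (a i powr r) - ln S" using ai Spos by (simp add: \<pi>_def ln_div)
          also have "ln (a i powr r) = r * ln (a i)" using ai by (simp add: ln_powr)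
          finally have "ln S = r * ln (a i) - ln (\<pi> i)" by linarith
          then show ?thesis by (simp add: right_diff_distrib)
        qed
      qed
      also have "\<dots> = (\<Sum>i\<in>I. \<pi> i * (r * ln (a i))) - (\<Sum>i\<in>I. \<pi> i * ln (\<pi> i))"
        by (simp add: sum_subtractf)
      finally show ?thesis .
    qed
    have lna: "(\<Sum>i\<in>I. \<pi> i * ln (a i)) = (\<Sum>k\<in>I. \<pi> k * ln (y k) + (1 - \<pi> k) * ln (1 - y k))"
    proof -
      have "(\<Sum>i\<in>I. \<pi> i * ln (a i)) = (\<Sum>i\<in>I. \<pi> i * ln (y i) + (\<Sum>k\<in>{k\<in>I. k \<noteq> i}. \<pi> i * ln (1 - y k)))"
      proof (rule sum.cong[OF refl])
        fix i assume i: "i \<in> I"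
        show "\<pi> i * ln (a i) = \<pi> i * ln (y i) + (\<Sum>k\<in>{k\<in>I. k \<noteq> i}. \<pi> i * ln (1 - y k))"
        proof (cases "\<pi> i = 0")
          case True then show ?thesis by simp
        next
          case False
          then have pp: "0 < \<pi> i" using \<pi>0 i by (simp add: less_le)
          note yy = apos_y[OF i pp]
          have pp2: "0 < (\<Prod>k\<in>I - {i}. 1 - y k)" by (rule prod_pos) (use yy in auto)
          have "ln (a i) = ln (y i) + ln (\<Prod>k\<in>I - {i}. 1 - y k)"
            unfolding a_def using yy(1) pp2 by (rule ln_mult_pos)
          also have "ln (\<Prod>k\<in>I - {i}. 1 - y k) = (\<Sum>k\<in>I - {i}. ln (1 - y k))"
          proof (rule ln_prod)
            show "finite (I - {i})" using fin by simp
            show "1 - y k \<noteq> 0" if "k \<in> I - {i}" for k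
            proof -
              have "0 < 1 - y k" using yy(2) that by blast
              then show ?thesis by simp
            qed
          qed
          finally have "ln (a i) = ln (y i) + (\<Sum>k\<in>I - {i}. ln (1 - y k))" .
          moreover have "I - {i} = {k\<in>I. k \<noteq> i}" by auto
          ultimately show ?thesis by (simp add: algebra_simps sum_distrib_left)
        qed
      qed
      also have "\<dots> = (\<Sum>i\<in>I. \<pi> i * ln (y i)) + (\<Sum>i\<in>I. \<Sum>k\<in>{k\<in>I. k \<noteq> i}. \<pi> i * ln (1 - y k))"
        by (simp add: sum.distrib)
      also have "(\<Sum>i\<in>I. \<Sum>k\<in>{k\<in>I. k \<noteq> i}. \<pi> i * ln (1 - y k)) = (\<Sum>k\<in>I. \<Sum>i\<in>{i\<in>I. k \<noteq> i}. \<pi> i * ln (1 - y k))"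
        by (rule sum.swap_restrict[OF fin fin])
      also have "\<dots> = (\<Sum>k\<in>I. (1 - \<pi> k) * ln (1 - y k))"
      proof (rule sum.cong[OF refl])
        fix k assume k: "k \<in> I"
        have "{i\<in>I. k \<noteq> i} = I - {k}" by auto
        then have "(\<Sum>i\<in>{i\<in>I. k \<noteq> i}. \<pi> i) = 1 - \<pi> k" using \<pi>1 k fin by (simp add: sum_diff1)
        then show "(\<Sum>i\<in>{i\<in>I. k \<noteq> i}. \<pi> i * ln (1 - y k)) = (1 - \<pi> k) * ln (1 - y k)"
          by (simp add: sum_distrib_right[symmetric])
      qed
      finally show ?thesis by (simp add: sum.distrib)
    qed
    have gib: "(\<Sum>k\<in>I. \<pi> k * ln (y k) + (1 - \<pi> k) * ln (1 - y k))
        \<le> (\<Sum>k\<in>I. \<pi> k * ln (\<pi> k) + (1 - \<pi> k) * ln (1 - \<pi> k))"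
    proof (rule sum_mono)
      fix k assume k: "k \<in> I"
      show "\<pi> k * ln (y k) + (1 - \<pi> k) * ln (1 - y k) \<le> \<pi> k * ln (\<pi> k) + (1 - \<pi> k) * ln (1 - \<pi> k)"
      proof (rule gibbs2)
        show "0 \<le> \<pi> k" "\<pi> k \<le> 1" "0 \<le> y k" "y k \<le> 1" using \<pi>0 \<pi>le1 y k by auto
        show "0 < y k" if "0 < \<pi> k" using apos_y[OF k that] by simp
        show "y k < 1" if "\<pi> k < 1"
        proof -
          have "sum \<pi> (I - {k}) = 1 - \<pi> k" using \<pi>1 k fin by (simp add: sum_diff1)
          then have "0 < sum \<pi> (I - {k})" using that by simp
          have "\<exists>i\<in>I - {k}. 0 < \<pi> i"
          proof (rule ccontr)
            assume "\<not> (\<exists>i\<in>I - {k}. 0 < \<pi> i)"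
            then have "sum \<pi> (I - {k}) \<le> 0" by (intro sum_nonpos) (meson not_le)
            then show False using \<open>0 < sum \<pi> (I - {k})\<close> by simp
          qed
          then obtain i where i: "i \<in> I - {k}" "0 < \<pi> i" by blast
          then have "\<forall>k'\<in>I - {i}. 0 < 1 - y k'" using apos_y(2)[of i] by auto
          moreover have "k \<in> I - {i}" using i k by auto
          ultimately show ?thesis by fastforce
        qed
      qed
    qed
    have "ln S \<le> r * (\<Sum>k\<in>I. \<pi> k * ln (\<pi> k) + (1 - \<pi> k) * ln (1 - \<pi> k)) - (\<Sum>i\<in>I. \<pi> i * ln (\<pi> i))"
    proof -
      have "(\<Sum>i\<in>I. \<pi> i * (r * ln (a i))) = r * (\<Sum>i\<in>I. \<pi> i * ln (a i))"
        by (simp add: sum_distrib_left algebra_simps)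
      then show ?thesis using lnS lna gib r(1) by (simp add: mult_left_mono)
    qed
    also have "\<dots> = - r * (\<Sum>k\<in>I. Psi (p - 1) (\<pi> k))"
    proof -
      have "r * (\<Sum>k\<in>I. \<pi> k * ln (\<pi> k) + (1 - \<pi> k) * ln (1 - \<pi> k)) - (\<Sum>i\<in>I. \<pi> i * ln (\<pi> i))
          = (\<Sum>k\<in>I. r * (\<pi> k * ln (\<pi> k) + (1 - \<pi> k) * ln (1 - \<pi> k)) - \<pi> k * ln (\<pi> k))"
        by (simp add: sum_distrib_left sum_subtractf)
      also have "\<dots> = (\<Sum>k\<in>I. - r * Psi (p - 1) (\<pi> k))"
      proof (rule sum.cong[OF refl])
        fix k
        have "- r * Psi (p - 1) (\<pi> k) = - (r * p) * (\<pi> k * ln (\<pi> k)) + r * (\<pi> k * ln (\<pi> k)) + r * ((1 - \<pi> k) * ln (1 - \<pi> k))"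
          by (simp add: Psi_def algebra_simps)
        also have "\<dots> = r * (\<pi> k * ln (\<pi> k) + (1 - \<pi> k) * ln (1 - \<pi> k)) - \<pi> k * ln (\<pi> k)"
          using r(3) by (simp add: algebra_simps)
        finally show "r * (\<pi> k * ln (\<pi> k) + (1 - \<pi> k) * ln (1 - \<pi> k)) - \<pi> k * ln (\<pi> k) = - r * Psi (p - 1) (\<pi> k)" by simp
      qed
      also have "\<dots> = - r * (\<Sum>k\<in>I. Psi (p - 1) (\<pi> k))" by (simp add: sum_distrib_left)
      finally show ?thesis .
    qed
    also have "\<dots> \<le> 0"
    proof -
      have "0 \<le> (\<Sum>k\<in>I. Psi (p - 1) (\<pi> k))"
        by (rule lemmaE[OF n fin card \<pi>0 \<pi>1]) (use p in auto)
      then show ?thesis using r(1) by (simp add: mult_nonneg_nonneg)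
    qed
    finally have "ln S \<le> 0" .
    then have "S \<le> 1" using Spos by simp
    then show ?thesis by (simp add: S_def a_def r_def)
  qed
qed

lemma lemmaC_hom:
  fixes I :: "'a set" and x T :: "'a \<Rightarrow> real"
  assumes n: "n \<ge> 2" and fin: "finite I" and card: "card I \<le> n"
    and xT: "\<forall>k\<in>I. 0 \<le> x k \<and> x k \<le> T k" and p: "1 \<le> p" "p - 1 \<le> c0 n"
  shows "(\<Sum>i\<in>I. x i powr (1 / p) * (\<Prod>k\<in>I - {i}. (T k - x k) powr (1 / p)))
      \<le> (\<Prod>k\<in>I. T k powr (1 / p))"
proof (cases "\<exists>k\<in>I. T k = 0")
  case True
  then obtain k where k: "k \<in> I" "T k = 0" by blast
  then have xk: "x k = 0" using xT by force
  have z: "x i powr (1 / p) * (\<Prod>k\<in>I - {i}. (T k - x k) powr (1 / p)) = 0" if "i \<in> I" for i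
  proof (cases "i = k")
    case True then show ?thesis using xk by simp
  next
    case False
    then have "k \<in> I - {i}" using k by auto
    then have "(\<Prod>k\<in>I - {i}. (T k - x k) powr (1 / p)) = 0"
    proof (intro prod_zero)
      show "finite (I - {i})" using fin by simp
      show "\<exists>a\<in>I - {i}. (T a - x a) powr (1 / p) = 0"
        using \<open>k \<in> I - {i}\<close> k xk by (intro bexI[of _ k]) auto
    qed
    then show ?thesis by simp
  qed
  have "(\<Sum>i\<in>I. x i powr (1 / p) * (\<Prod>k\<in>I - {i}. (T k - x k) powr (1 / p))) = 0"
    by (rule sum.neutral) (use z in blast)
  moreover have "0 \<le> (\<Prod>k\<in>I. T k powr (1 / p))" by (simp add: prod_nonneg)
  ultimately show ?thesis by simp
next
  case False
  then have Tpos: "\<forall>k\<in>I. 0 < T k" using xT by force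
  define y where "y k = x k / T k" for k
  have y: "\<forall>i\<in>I. 0 \<le> y i \<and> y i \<le> 1" using xT Tpos by (auto simp: y_def field_simps)
  have xk: "x k = T k * y k" if "k \<in> I" for k
  proof -
    have "0 < T k" using Tpos that by blast
    then show ?thesis by (simp add: y_def)
  qed
  have Txk: "T k - x k = T k * (1 - y k)" if "k \<in> I" for k using xk[OF that] by (simp add: algebra_simps)
  have tm: "x i powr (1 / p) * (\<Prod>k\<in>I - {i}. (T k - x k) powr (1 / p))
      = (\<Prod>k\<in>I. T k powr (1 / p)) * (y i * (\<Prod>k\<in>I - {i}. 1 - y k)) powr (1 / p)" if i: "i \<in> I" for i
  proof -
    have "(\<Prod>k\<in>I - {i}. (T k - x k) powr (1 / p)) = (\<Prod>k\<in>I - {i}. T k powr (1 / p) * (1 - y k) powr (1 / p))"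
      using Txk by (intro prod.cong refl) (auto simp: powr_mult)
    also have "\<dots> = (\<Prod>k\<in>I - {i}. T k powr (1 / p)) * (\<Prod>k\<in>I - {i}. (1 - y k) powr (1 / p))"
      by (simp add: prod.distrib)
    finally have e1: "(\<Prod>k\<in>I - {i}. (T k - x k) powr (1 / p)) = (\<Prod>k\<in>I - {i}. T k powr (1 / p)) * (\<Prod>k\<in>I - {i}. (1 - y k) powr (1 / p))" .
    have e2: "(\<Prod>k\<in>I. T k powr (1 / p)) = T i powr (1 / p) * (\<Prod>k\<in>I - {i}. T k powr (1 / p))"
      using fin i by (simp add: prod.remove)
    have e3: "(y i * (\<Prod>k\<in>I - {i}. 1 - y k)) powr (1 / p) = y i powr (1 / p) * (\<Prod>k\<in>I - {i}. (1 - y k) powr (1 / p))"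
      by (simp add: powr_mult prod_powr_distrib)
    have e4: "x i powr (1 / p) = T i powr (1 / p) * y i powr (1 / p)" using xk[OF i] by (simp add: powr_mult)
    show ?thesis unfolding e1 e2 e3 e4 by (simp add: algebra_simps)
  qed
  have "(\<Sum>i\<in>I. x i powr (1 / p) * (\<Prod>k\<in>I - {i}. (T k - x k) powr (1 / p)))
      = (\<Prod>k\<in>I. T k powr (1 / p)) * (\<Sum>i\<in>I. (y i * (\<Prod>k\<in>I - {i}. 1 - y k)) powr (1 / p))"
    using tm by (simp add: sum_distrib_left)
  also have "\<dots> \<le> (\<Prod>k\<in>I. T k powr (1 / p)) * 1"
    by (intro mult_left_mono lemmaC[OF n fin card y p]) (simp add: prod_nonneg)
  finally show ?thesis by simp
qed


definition bijs :: "'a set \<Rightarrow> 'b set \<Rightarrow> ('a \<Rightarrow> 'b) set" where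
  "bijs R C = {f. bij_betw f R C \<and> (\<forall>x. x \<notin> R \<longrightarrow> f x = undefined)}"

lemma finite_bijs:
  assumes "finite R" "finite C" shows "finite (bijs R C)"
proof -
  have "bijs R C \<subseteq> PiE R (\<lambda>_. C)"
    by (auto simp: bijs_def PiE_def extensional_def bij_betw_def)
  moreover have "finite (PiE R (\<lambda>_. C))" using assms by (intro finite_PiE) auto
  ultimately show ?thesis by (rule finite_subset)
qed

lemma bij_upd:
  assumes "i \<notin> A" "c \<notin> B" "bij_betw g A B"
  shows "bij_betw (g(i := c)) (insert i A) (insert c B)"
proof -
  have e: "bij_betw (g(i := c)) A B = bij_betw g A B" by (rule bij_betw_cong) (use assms(1) in auto)
  have "bij_betw (g(i := c)) (A \<union> {i}) (B \<union> {(g(i := c)) i})"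
    by (rule notIn_Un_bij_betw) (use assms e in auto)
  then show ?thesis by simp
qed

lemma bijs_decomp:
  fixes F :: "('a \<Rightarrow> 'b) \<Rightarrow> real"
  assumes finR: "finite R" and finC: "finite C" and c: "c \<in> C"
  shows "(\<Sum>f\<in>bijs R C. F f) = (\<Sum>i\<in>R. \<Sum>g\<in>bijs (R - {i}) (C - {c}). F (g(i := c)))"
proof -
  define S where "S = Sigma R (\<lambda>i. bijs (R - {i}) (C - {c}))"
  have "(\<Sum>i\<in>R. \<Sum>g\<in>bijs (R - {i}) (C - {c}). F (g(i := c))) = (\<Sum>(i, g)\<in>S. F (g(i := c)))"
    unfolding S_def using finR finC by (intro sum.Sigma) (auto intro!: finite_bijs)
  also have "\<dots> = (\<Sum>f\<in>bijs R C. F f)"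
  proof (rule sum.reindex_bij_witness[where j = "\<lambda>(i, g). g(i := c)"
        and i = "\<lambda>f. (inv_into R f c, f(inv_into R f c := undefined))"])
    fix a assume a: "a \<in> S"
    obtain i g where ig: "a = (i, g)" by (cases a)
    have i: "i \<in> R" and g: "bij_betw g (R - {i}) (C - {c})" "\<And>x. x \<notin> R - {i} \<Longrightarrow> g x = undefined"
      using a by (auto simp: S_def ig bijs_def)
    have bij: "bij_betw (g(i := c)) R C"
    proof -
      have "bij_betw (g(i := c)) (insert i (R - {i})) (insert c (C - {c}))"
        by (rule bij_upd[OF _ _ g(1)]) auto
      moreover have "insert i (R - {i}) = R" "insert c (C - {c}) = C" using i c by auto
      ultimately show ?thesis by simp
    qed
    have inv: "inv_into R (g(i := c)) c = i"
      using bij i by (metis bij_betw_imp_inj_on fun_upd_same inv_into_f_f)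
    have gi: "g i = undefined" using g(2) by simp
    show "(\<lambda>f. (inv_into R f c, f(inv_into R f c := undefined))) ((\<lambda>(i, g). g(i := c)) a) = a"
      using gi by (simp add: ig inv fun_upd_idem)
    show "(\<lambda>(i, g). g(i := c)) a \<in> bijs R C"
      using bij g(2) i by (auto simp: ig bijs_def)
  next
    fix f assume f: "f \<in> bijs R C"
    then have bij: "bij_betw f R C" and ext: "\<And>x. x \<notin> R \<Longrightarrow> f x = undefined" by (auto simp: bijs_def)
    define i where "i = inv_into R f c"
    have i: "i \<in> R" "f i = c" using bij c unfolding i_def
      by (auto intro: bij_betw_inv_into_left bij_betw_inv_into_right
          simp: bij_betw_def inv_into_into)
    show "(\<lambda>(i, g). g(i := c)) ((\<lambda>f. (inv_into R f c, f(inv_into R f c := undefined))) f) = f"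
      using i by (auto simp: i_def[symmetric] fun_eq_iff)
    have "bij_betw f (R - {i}) (C - {c})"
      using bij_betw_DiffI[OF bij, of "{i}" "{c}"] i bij
      by (auto simp: bij_betw_def)
    moreover have "bij_betw (f(i := undefined)) (R - {i}) (C - {c}) = bij_betw f (R - {i}) (C - {c})"
      by (rule bij_betw_cong) auto
    ultimately have "bij_betw (f(i := undefined)) (R - {i}) (C - {c})" by simp
    then show "(\<lambda>f. (inv_into R f c, f(inv_into R f c := undefined))) f \<in> S"
      using i ext by (auto simp: S_def i_def[symmetric] bijs_def)
  next
    fix a assume "a \<in> S"
    show "F ((\<lambda>(i, g). g(i := c)) a) = (case a of (i, g) \<Rightarrow> F (g(i := c)))"
      by (cases a) simp
  qed
  finally show ?thesis by simp
qed


lemma perm_bound: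
  fixes x :: "'a \<Rightarrow> 'b \<Rightarrow> real"
  assumes n: "n \<ge> 2" and p: "1 \<le> p" "p - 1 \<le> c0 n"
  shows "finite C \<Longrightarrow> card C \<le> n \<Longrightarrow> finite R \<Longrightarrow> (\<forall>i\<in>R. \<forall>j\<in>C. 0 \<le> x i j) \<Longrightarrow>
    (\<Sum>f\<in>bijs R C. \<Prod>i\<in>R. x i (f i) powr (1 / p)) \<le> (\<Prod>i\<in>R. (\<Sum>j\<in>C. x i j) powr (1 / p))"
proof (induction "card C" arbitrary: C R)
  case 0
  then have C: "C = {}" by simp
  show ?case
  proof (cases "R = {}")
    case True
    have "bijs R C = {\<lambda>_. undefined}" using True C by (auto simp: bijs_def bij_betw_def fun_eq_iff)
    then show ?thesis using True by simp
  next
    case False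
    then have "bijs R C = {}" using C by (auto simp: bijs_def bij_betw_def)
    then show ?thesis by (simp add: prod_nonneg)
  qed
next
  case (Suc m)
  note finC = Suc.prems(1) and cardC = Suc.prems(2) and finR = Suc.prems(3) and x0 = Suc.prems(4)
  show ?case
  proof (cases "card R = card C")
    case False
    then have "bijs R C = {}" by (auto simp: bijs_def dest: bij_betw_same_card)
    then show ?thesis by (simp add: prod_nonneg)
  next
    case True
    have "C \<noteq> {}" using Suc.hyps(2) by auto
    then obtain c where c: "c \<in> C" by blast
    define T where "T k = (\<Sum>j\<in>C. x k j)" for k
    have inner: "(\<Sum>g\<in>bijs (R - {i}) (C - {c}). \<Prod>k\<in>R. x k ((g(i := c)) k) powr (1 / p))
        \<le> x i c powr (1 / p) * (\<Prod>k\<in>R - {i}. (T k - x k c) powr (1 / p))" if i: "i \<in> R" for i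
    proof -
      have "(\<Sum>g\<in>bijs (R - {i}) (C - {c}). \<Prod>k\<in>R. x k ((g(i := c)) k) powr (1 / p))
          = (\<Sum>g\<in>bijs (R - {i}) (C - {c}). x i c powr (1 / p) * (\<Prod>k\<in>R - {i}. x k (g k) powr (1 / p)))"
      proof (rule sum.cong[OF refl])
        fix g
        have "(\<Prod>k\<in>R. x k ((g(i := c)) k) powr (1 / p)) = x i c powr (1 / p) * (\<Prod>k\<in>R - {i}. x k ((g(i := c)) k) powr (1 / p))"
          using finR i by (simp add: prod.remove)
        also have "(\<Prod>k\<in>R - {i}. x k ((g(i := c)) k) powr (1 / p)) = (\<Prod>k\<in>R - {i}. x k (g k) powr (1 / p))"
          by (rule prod.cong) auto
        finally show "(\<Prod>k\<in>R. x k ((g(i := c)) k) powr (1 / p)) = x i c powr (1 / p) * (\<Prod>k\<in>R - {i}. x k (g k) powr (1 / p))" .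
      qed
      also have "\<dots> = x i c powr (1 / p) * (\<Sum>g\<in>bijs (R - {i}) (C - {c}). \<Prod>k\<in>R - {i}. x k (g k) powr (1 / p))"
        by (simp add: sum_distrib_left)
      also have "\<dots> \<le> x i c powr (1 / p) * (\<Prod>k\<in>R - {i}. (\<Sum>j\<in>C - {c}. x k j) powr (1 / p))"
      proof (intro mult_left_mono)
        show "(\<Sum>g\<in>bijs (R - {i}) (C - {c}). \<Prod>k\<in>R - {i}. x k (g k) powr (1 / p))
            \<le> (\<Prod>k\<in>R - {i}. (\<Sum>j\<in>C - {c}. x k j) powr (1 / p))"
          by (rule Suc.hyps(1)) (use Suc.hyps(2) finC c cardC finR x0 in \<open>auto simp: card_Diff_singleton\<close>)
      qed simp
      also have "(\<Prod>k\<in>R - {i}. (\<Sum>j\<in>C - {c}. x k j) powr (1 / p)) = (\<Prod>k\<in>R - {i}. (T k - x k c) powr (1 / p))"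
        using finC c by (intro prod.cong refl) (simp add: T_def sum_diff1)
      finally show ?thesis .
    qed
    have "(\<Sum>f\<in>bijs R C. \<Prod>i\<in>R. x i (f i) powr (1 / p))
        = (\<Sum>i\<in>R. \<Sum>g\<in>bijs (R - {i}) (C - {c}). \<Prod>k\<in>R. x k ((g(i := c)) k) powr (1 / p))"
      by (rule bijs_decomp[OF finR finC c])
    also have "\<dots> \<le> (\<Sum>i\<in>R. x i c powr (1 / p) * (\<Prod>k\<in>R - {i}. (T k - x k c) powr (1 / p)))"
      by (rule sum_mono) (rule inner)
    also have "\<dots> \<le> (\<Prod>k\<in>R. T k powr (1 / p))"
    proof (rule lemmaC_hom[OF n finR _ _ p])
      show "card R \<le> n" using True cardC by simp
      show "\<forall>k\<in>R. 0 \<le> x k c \<and> x k c \<le> T k"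
        using x0 c finC by (auto simp: T_def intro: member_le_sum)
    qed
    finally show ?thesis by (simp add: T_def)
  qed
qed


lemma sum_perm_bijs:
  fixes h :: "'a \<Rightarrow> 'a \<Rightarrow> real"
  shows "(\<Sum>\<sigma> | \<sigma> permutes S. \<Prod>i\<in>S. h i (\<sigma> i)) = (\<Sum>f\<in>bijs S S. \<Prod>i\<in>S. h i (f i))"
proof (rule sum.reindex_bij_witness[where j = "\<lambda>\<sigma> i. if i \<in> S then \<sigma> i else undefined"
      and i = "\<lambda>f i. if i \<in> S then f i else i"])
  fix \<sigma> assume s: "\<sigma> \<in> {\<sigma>. \<sigma> permutes S}"
  then have ps: "\<sigma> permutes S" by simp
  show "(\<lambda>i. if i \<in> S then (if i \<in> S then \<sigma> i else undefined) else i) = \<sigma>"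
    using ps by (auto simp: fun_eq_iff permutes_not_in)
  have "bij_betw \<sigma> S S" using ps by (rule permutes_imp_bij)
  moreover have "bij_betw (\<lambda>i. if i \<in> S then \<sigma> i else undefined) S S = bij_betw \<sigma> S S"
    by (rule bij_betw_cong) auto
  ultimately show "(\<lambda>i. if i \<in> S then \<sigma> i else undefined) \<in> bijs S S"
    by (auto simp: bijs_def)
  show "(\<Prod>i\<in>S. h i (if i \<in> S then \<sigma> i else undefined)) = (\<Prod>i\<in>S. h i (\<sigma> i))"
    by (rule prod.cong) auto
next
  fix f assume f: "f \<in> bijs S S"
  then have bij: "bij_betw f S S" and ext: "\<And>x. x \<notin> S \<Longrightarrow> f x = undefined" by (auto simp: bijs_def)
  show "(\<lambda>i. if i \<in> S then (if i \<in> S then f i else i) else undefined) = f"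
    using ext by (auto simp: fun_eq_iff)
  have "bij_betw (\<lambda>i. if i \<in> S then f i else i) S S = bij_betw f S S"
    by (rule bij_betw_cong) auto
  then have "(\<lambda>i. if i \<in> S then f i else i) permutes S"
    using bij by (intro bij_imp_permutes) auto
  then show "(\<lambda>i. if i \<in> S then f i else i) \<in> {\<sigma>. \<sigma> permutes S}" by simp
qed

lemma per_le1:
  assumes n: "n \<ge> 2" and p: "1 \<le> p" "p - 1 \<le> c0 n"
    and rows: "\<forall>i<n. row_lp_norm n p A i = 1"
  shows "per n A \<le> 1"
proof -
  define x where "x i j = \<bar>A i j\<bar> powr p" for i j
  have ax: "\<bar>a\<bar> = (\<bar>a\<bar> powr p) powr (1 / p)" for a :: real
    using p by (simp add: powr_powr)
  have "per n A = (\<Sum>\<sigma> | \<sigma> permutes {..<n}. \<Prod>i\<in>{..<n}. A i (\<sigma> i))" by (simp add: per_def)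
  also have "\<dots> \<le> (\<Sum>\<sigma> | \<sigma> permutes {..<n}. \<Prod>i\<in>{..<n}. \<bar>A i (\<sigma> i)\<bar>)"
  proof (rule sum_mono)
    fix \<sigma>
    have "(\<Prod>i\<in>{..<n}. A i (\<sigma> i)) \<le> \<bar>\<Prod>i\<in>{..<n}. A i (\<sigma> i)\<bar>" by simp
    also have "\<dots> = (\<Prod>i\<in>{..<n}. \<bar>A i (\<sigma> i)\<bar>)" by (simp add: abs_prod)
    finally show "(\<Prod>i\<in>{..<n}. A i (\<sigma> i)) \<le> (\<Prod>i\<in>{..<n}. \<bar>A i (\<sigma> i)\<bar>)" .
  qed
  also have "\<dots> = (\<Sum>\<sigma> | \<sigma> permutes {..<n}. \<Prod>i\<in>{..<n}. x i (\<sigma> i) powr (1 / p))"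
    unfolding x_def by (subst ax) (rule refl)
  also have "\<dots> = (\<Sum>f\<in>bijs {..<n} {..<n}. \<Prod>i\<in>{..<n}. x i (f i) powr (1 / p))"
    by (rule sum_perm_bijs)
  also have "\<dots> \<le> (\<Prod>i\<in>{..<n}. (\<Sum>j\<in>{..<n}. x i j) powr (1 / p))"
    by (rule perm_bound[OF n p]) (auto simp: x_def)
  also have "\<dots> = (\<Prod>i\<in>{..<n}. row_lp_norm n p A i)"
    by (simp add: row_lp_norm_def x_def)
  also have "\<dots> = 1" using rows by simp
  finally show ?thesis .
qed

lemma per_id:
  "per n (\<lambda>i j. if i = j then 1 else 0) = 1"
proof -
  have "per n (\<lambda>i j. if i = j then 1 else 0) = (\<Sum>\<sigma> | \<sigma> permutes {..<n}. if \<sigma> = id then 1 else 0)"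
    unfolding per_def
  proof (rule sum.cong[OF refl])
    fix \<sigma> assume "\<sigma> \<in> {\<sigma>. \<sigma> permutes {..<n}}"
    then have ps: "\<sigma> permutes {..<n}" by simp
    show "(\<Prod>i<n. if i = \<sigma> i then 1 else 0) = (if \<sigma> = id then 1 else (0::real))"
    proof (cases "\<sigma> = id")
      case True then show ?thesis by simp
    next
      case False
      then obtain k where k: "\<sigma> k \<noteq> k" by (auto simp: fun_eq_iff)
      then have "k \<in> {..<n}" using ps by (meson permutes_not_in)
      then have "(\<Prod>i<n. if i = \<sigma> i then 1 else (0::real)) = 0"
        using k by (intro prod_zero) (auto intro!: bexI[of _ k])
      then show ?thesis using False by simp
    qed
  qed
  also have "\<dots> = 1"
    using finite_permutations[of "{..<n}"] permutes_id[of "{..<n}"] by (simp add: sum.delta)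
  finally show ?thesis .
qed

lemma row_id:
  assumes "i < n" "1 \<le> p"
  shows "row_lp_norm n p (\<lambda>i j. if i = j then 1 else 0) i = 1"
proof -
  have "(\<Sum>j<n. \<bar>(if i = j then 1 else 0 :: real)\<bar> powr p) = (\<Sum>j<n. if j = i then 1 else 0)"
    by (rule sum.cong) auto
  also have "\<dots> = 1" using assms by (simp add: sum.delta')
  finally show ?thesis by (simp add: row_lp_norm_def)
qed

theorem theorem1p3:
  fixes n :: nat and p :: real
  assumes "n \<ge> 2"
    and "1 \<le> p"
    and "p \<le> (real n * ln (real n) - (real n - 1) * ln (real n - 1)) / ln (real n)"
  shows "U n p = 1"
proof -
  have lnN: "0 < ln (real n)" using assms(1) by simp
  have "(real n * ln (real n) - (real n - 1) * ln (real n - 1)) / ln (real n) - 1 = c0 n"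
    using lnN by (simp add: c0_def field_simps)
  then have pc: "p - 1 \<le> c0 n" using assms(3) by linarith
  show ?thesis
    unfolding U_def
  proof (rule cSup_eq_maximum)
    show "1 \<in> {per n A |A. \<forall>i<n. row_lp_norm n p A i = 1}"
      using per_id row_id assms(2) by (intro CollectI exI[of _ "\<lambda>i j. if i = j then 1 else 0"]) auto
    show "x \<le> 1" if "x \<in> {per n A |A. \<forall>i<n. row_lp_norm n p A i = 1}" for x
      using that per_le1[OF assms(1) assms(2) pc] by auto
  qed
qed

end
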